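(* Let $d\ge 3$, $2\le k\le d$ and $n\ge d$. Then $\chi^{\mathsf{s}}_{d,k}(n)=n$.
   Context: A $k$-uniform hypergraph $H=(V,E)$ consists of a finite set $V$ and $E\subseteq\binom{V}{k}$. A (linear) embedding of $H$ into $\mathbb{R}^d$ is a map $\phi:V(H)\to\mathbb{R}^d$ with $\dim\operatorname{aff}\phi(e)=k-1$ for every edge $e$ and $\operatorname{conv}\phi(e_1)\cap\operatorname{conv}\phi(e_2)=\operatorname{conv}\phi(e_1\cap e_2)$ for all edges $e_1,e_2$. $\mathcal{E}_{d,k}$ is the set of $k$-uniform hypergraphs admitting such an embedding into $\mathbb{R}^d$. A strong $c$-coloring of $H$ is a map $\kappa:V(H)\to\{1,\dots,c\}$ with $|\kappa(e)|=k$ for every edge $e$; $\chi^{\mathsf{s}}(H)$ is the least such $c$. $\chi^{\mathsf{s}}_{d,k}(n)=\max\{\chi^{\mathsf{s}}(H): H\in\mathcal{E}_{d,k},\ |V(H)|=n\}$. *)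

theory Defs
  imports "HOL-Analysis.Analysis"
begin

definition k_uniform :: "nat \<Rightarrow> 'v set \<Rightarrow> 'v set set \<Rightarrow> bool" where
  "k_uniform k V E \<longleftrightarrow> finite V \<and> E \<subseteq> {e. e \<subseteq> V \<and> card e = k}"

definition linear_embedding :: "nat \<Rightarrow> 'v set \<Rightarrow> 'v set set \<Rightarrow> ('v \<Rightarrow> 'a::euclidean_space) \<Rightarrow> bool" where
  "linear_embedding k V E \<phi> \<longleftrightarrow>
     (\<forall>e\<in>E. aff_dim (\<phi> ` e) = int k - 1) \<and>
     (\<forall>e1\<in>E. \<forall>e2\<in>E. convex hull (\<phi> ` e1) \<inter> convex hull (\<phi> ` e2) = convex hull (\<phi> ` (e1 \<inter> e2)))"

text \<open>Membership in E_{d,k}, where R^d is the type real^'d (d = CARD('d)).\<close>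
definition embeddable :: "'d::finite itself \<Rightarrow> nat \<Rightarrow> 'v set \<Rightarrow> 'v set set \<Rightarrow> bool" where
  "embeddable _ k V E \<longleftrightarrow> k_uniform k V E \<and> (\<exists>\<phi> :: 'v \<Rightarrow> real^'d. linear_embedding k V E \<phi>)"

definition strong_coloring :: "nat \<Rightarrow> 'v set \<Rightarrow> 'v set set \<Rightarrow> nat \<Rightarrow> ('v \<Rightarrow> nat) \<Rightarrow> bool" where
  "strong_coloring k V E c \<kappa> \<longleftrightarrow> (\<forall>v\<in>V. \<kappa> v \<in> {1..c}) \<and> (\<forall>e\<in>E. card (\<kappa> ` e) = k)"

definition strong_chromatic :: "nat \<Rightarrow> 'v set \<Rightarrow> 'v set set \<Rightarrow> nat" where
  "strong_chromatic k V E = (LEAST c. \<exists>\<kappa>. strong_coloring k V E c \<kappa>)"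

text \<open>chi^s_{d,k}(n); hypergraphs are taken with vertices in nat (every finite hypergraph
  is isomorphic to one of these).\<close>
definition chi_s :: "'d::finite itself \<Rightarrow> nat \<Rightarrow> nat \<Rightarrow> nat" where
  "chi_s D k n = Max {strong_chromatic k V E | (V :: nat set) E.
       embeddable D k V E \<and> card V = n}"

end

theory Submission
  imports Defs "HOL-Computational_Algebra.Polynomial"
begin


definition iota :: "'d::finite \<Rightarrow> nat" where
  "iota = (SOME h. bij_betw h UNIV {0..<CARD('d)})"

lemma iota_bij: "bij_betw (iota :: 'd::finite \<Rightarrow> nat) UNIV {0..<CARD('d)}"
proof -
  have "\<exists>h. bij_betw h (UNIV::'d set) {0..<CARD('d)}"
    using ex_bij_betw_finite_nat[of "UNIV::'d set"] by simp
  thus ?thesis unfolding iota_def by (rule someI_ex)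
qed

definition mom :: "real \<Rightarrow> real^'d::finite" where
  "mom t = (\<chi> i. t ^ (iota i + 1))"

lemma poly_affine:
  fixes g :: "real poly"
  assumes "degree g \<le> CARD('d::finite)"
  shows "\<exists>(a::real^'d) c. \<forall>t. inner a (mom t) + c = poly g t"
proof -
  define a :: "real^'d" where "a = (\<chi> i. coeff g (iota i + 1))"
  have "inner a (mom t) + coeff g 0 = poly g t" for t
  proof -
    have "inner a (mom t) = (\<Sum>i\<in>(UNIV::'d set). coeff g (iota i + 1) * t ^ (iota i + 1))"
      by (simp add: inner_vec_def a_def mom_def)
    also have "\<dots> = (\<Sum>m\<in>{0..<CARD('d)}. coeff g (m + 1) * t ^ (m + 1))"
      using sum.reindex_bij_betw[OF iota_bij[where 'd='d], of "\<lambda>m. coeff g (m + 1) * t ^ (m + 1)"]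
      by simp
    finally have 1: "inner a (mom t) + coeff g 0 = (\<Sum>m<Suc CARD('d). coeff g m * t ^ m)"
      unfolding sum.lessThan_Suc_shift by (simp add: atLeast0LessThan)
    have "poly g t = (\<Sum>m\<le>degree g. coeff g m * t ^ m)" by (rule poly_altdef)
    also have "\<dots> = (\<Sum>m<Suc CARD('d). coeff g m * t ^ m)"
      using assms by (intro sum.mono_neutral_left) (auto simp: coeff_eq_0)
    finally show ?thesis using 1 by simp
  qed
  thus ?thesis by blast
qed



lemma hull_img_repr:
  fixes \<phi> :: "nat \<Rightarrow> 'a::real_vector"
  assumes "finite S" "inj_on \<phi> S" "x \<in> convex hull (\<phi> ` S)"
  shows "\<exists>l. (\<forall>v\<in>S. 0 \<le> l v) \<and> sum l S = 1 \<and> (\<Sum>v\<in>S. l v *\<^sub>R \<phi> v) = x"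
proof -
  from assms(3) obtain u where u: "\<forall>y\<in>\<phi>`S. 0 \<le> u y" "sum u (\<phi>`S) = 1"
    "(\<Sum>y\<in>\<phi>`S. u y *\<^sub>R y) = x"
    using convex_hull_finite[of "\<phi>`S"] assms(1) by auto
  have "sum u (\<phi>`S) = sum (u \<circ> \<phi>) S" by (rule sum.reindex[OF assms(2)])
  moreover have "(\<Sum>y\<in>\<phi>`S. u y *\<^sub>R y) = (\<Sum>v\<in>S. (u \<circ> \<phi>) v *\<^sub>R \<phi> v)"
    by (subst sum.reindex[OF assms(2)]) simp
  ultimately show ?thesis using u by (intro exI[of _ "u \<circ> \<phi>"]) auto
qed

lemma repr_hull_img:
  fixes \<phi> :: "nat \<Rightarrow> 'a::real_vector"
  assumes "finite S" "\<forall>v\<in>S. 0 \<le> l v" "sum l S = 1"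
  shows "(\<Sum>v\<in>S. l v *\<^sub>R \<phi> v) \<in> convex hull (\<phi> ` S)"
proof -
  have "\<And>v. v \<in> S \<Longrightarrow> \<phi> v \<in> convex hull (\<phi> ` S)" by (simp add: hull_inc)
  then show ?thesis
    using convex_sum[of S "convex hull (\<phi> ` S)" l \<phi>] assms by (simp add: convex_convex_hull)
qed

lemma core:
  fixes \<phi> :: "nat \<Rightarrow> 'a::real_inner" and f :: "nat \<Rightarrow> real"
  assumes fin: "finite V" and inj: "inj_on \<phi> V" and SV: "S \<subseteq> V" and TV: "T \<subseteq> V"
    and hS: "\<forall>v\<in>V. f v - (inner aS (\<phi> v) + cS) \<ge> 0 \<and> (f v - (inner aS (\<phi> v) + cS) = 0 \<longleftrightarrow> v \<in> S)"
    and hT: "\<forall>v\<in>V. f v - (inner aT (\<phi> v) + cT) \<ge> 0 \<and> (f v - (inner aT (\<phi> v) + cT) = 0 \<longleftrightarrow> v \<in> T)"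
  shows "convex hull (\<phi>`S) \<inter> convex hull (\<phi>`T) \<subseteq> convex hull (\<phi>`(S\<inter>T))"
proof
  fix x assume x: "x \<in> convex hull (\<phi>`S) \<inter> convex hull (\<phi>`T)"
  have finS: "finite S" and finT: "finite T" using fin SV TV finite_subset by auto
  obtain l where l: "\<forall>v\<in>S. 0 \<le> l v" "sum l S = 1" "(\<Sum>v\<in>S. l v *\<^sub>R \<phi> v) = x"
    using hull_img_repr[OF finS inj_on_subset[OF inj SV]] x by blast
  obtain m where m: "\<forall>v\<in>T. 0 \<le> m v" "sum m T = 1" "(\<Sum>v\<in>T. m v *\<^sub>R \<phi> v) = x"
    using hull_img_repr[OF finT inj_on_subset[OF inj TV]] x by blast
  define PS where "PS v = f v - (inner aS (\<phi> v) + cS)" for v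
  define PT where "PT v = f v - (inner aT (\<phi> v) + cT)" for v
  have lin: "(\<Sum>v\<in>A. c v * f v) = inner a x + b + (\<Sum>v\<in>A. c v * (f v - (inner a (\<phi> v) + b)))"
    if "sum c A = 1" "(\<Sum>v\<in>A. c v *\<^sub>R \<phi> v) = x" for A c a b
  proof -
    have "(\<Sum>v\<in>A. c v * (f v - (inner a (\<phi> v) + b))) =
       (\<Sum>v\<in>A. c v * f v) - (\<Sum>v\<in>A. c v * inner a (\<phi> v)) - (\<Sum>v\<in>A. c v) * b"
    proof -
      have "(\<Sum>v\<in>A. c v * (f v - (inner a (\<phi> v) + b))) =
         (\<Sum>v\<in>A. c v * f v - c v * inner a (\<phi> v) - c v * b)"
        by (simp add: algebra_simps)
      also have "\<dots> = (\<Sum>v\<in>A. c v * f v) - (\<Sum>v\<in>A. c v * inner a (\<phi> v)) - (\<Sum>v\<in>A. c v * b)"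
        by (simp only: sum_subtractf)
      also have "(\<Sum>v\<in>A. c v * b) = (\<Sum>v\<in>A. c v) * b" by (simp only: sum_distrib_right)
      finally show ?thesis .
    qed
    moreover have "(\<Sum>v\<in>A. c v * inner a (\<phi> v)) = inner a x"
      using that(2) by (auto simp: inner_sum_right)
    ultimately show ?thesis using that(1) by simp
  qed
  have A1: "(\<Sum>v\<in>S. l v * f v) = inner aS x + cS"
    using lin[OF l(2) l(3), of aS cS] hS SV by (auto intro!: sum.neutral)
  have A2: "(\<Sum>v\<in>S. l v * f v) = inner aT x + cT + (\<Sum>v\<in>S. l v * PT v)"
    using lin[OF l(2) l(3), of aT cT] by (simp add: PT_def)
  have B1: "(\<Sum>v\<in>T. m v * f v) = inner aT x + cT"
    using lin[OF m(2) m(3), of aT cT] hT TV by (auto intro!: sum.neutral)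
  have B2: "(\<Sum>v\<in>T. m v * f v) = inner aS x + cS + (\<Sum>v\<in>T. m v * PS v)"
    using lin[OF m(2) m(3), of aS cS] by (simp add: PS_def)
  have n1: "(\<Sum>v\<in>S. l v * PT v) \<ge> 0"
    using l(1) hT SV by (auto intro!: sum_nonneg simp: PT_def)
  have nn2: "\<forall>v\<in>T. m v * PS v \<ge> 0"
    using m(1) hS TV by (auto simp: PS_def)
  hence n2: "(\<Sum>v\<in>T. m v * PS v) \<ge> 0" by (simp add: sum_nonneg)
  have z: "(\<Sum>v\<in>T. m v * PS v) = 0" using A1 A2 B1 B2 n1 n2 by linarith
  have each: "\<forall>v\<in>T. m v * PS v = 0" using sum_nonneg_eq_0_iff[OF finT, of "\<lambda>v. m v * PS v"] nn2 z by simp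
  have out: "m v = 0" if "v \<in> T - S \<inter> T" for v
  proof -
    have "PS v \<noteq> 0" using hS that TV by (auto simp: PS_def)
    thus ?thesis using each that by auto
  qed
  have s1: "sum m (S \<inter> T) = 1"
    using sum.mono_neutral_left[OF finT, of "S \<inter> T" m] out m(2) by auto
  have s2: "(\<Sum>v\<in>S\<inter>T. m v *\<^sub>R \<phi> v) = x"
    using sum.mono_neutral_left[OF finT, of "S \<inter> T" "\<lambda>v. m v *\<^sub>R \<phi> v"] out m(3) by auto
  show "x \<in> convex hull (\<phi>`(S\<inter>T))"
    using repr_hull_img[of "S \<inter> T" m \<phi>] finT m(1) s1 s2 by auto
qed



lemma mom_inj: "inj (mom :: real \<Rightarrow> real^'d::finite)"
proof
  fix s t :: real assume st: "(mom s :: real^'d) = mom t"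
  obtain a :: "real^'d" and c where ac: "\<forall>t. inner a (mom t) + c = poly [:0,1:] t"
    using poly_affine[of "[:0,1:]", where 'd='d] by auto
  have "s = inner a (mom s) + c" using ac[rule_format, of s] by simp
  also have "\<dots> = inner a (mom t) + c" using st by simp
  also have "\<dots> = t" using ac[rule_format, of t] by simp
  finally show "s = t" .
qed

lemma mom_real_inj: "inj (\<lambda>v::nat. mom (real v) :: real^'d::finite)"
proof (rule injI)
  fix x y :: nat assume "(mom (real x) :: real^'d) = mom (real y)"
  hence "real x = real y" using mom_inj[where 'd='d] by (auto dest: injD)
  thus "x = y" by simp
qed

lemma aff_indep:
  fixes S :: "nat set"
  assumes "finite S" "card S \<le> CARD('d::finite) + 1"
  shows "\<not> affine_dependent ((\<lambda>v. mom (real v) :: real^'d) ` S)"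
proof
  define \<phi> where "\<phi> = (\<lambda>v. mom (real v) :: real^'d)"
  have inj: "inj \<phi>" unfolding \<phi>_def by (rule mom_real_inj)
  assume "affine_dependent ((\<lambda>v. mom (real v) :: real^'d) ` S)"
  hence "affine_dependent (\<phi> ` S)" by (simp add: \<phi>_def)
  then obtain v where v: "v \<in> S" "\<phi> v \<in> affine hull (\<phi> ` S - {\<phi> v})"
    unfolding affine_dependent_def by auto
  have eq: "\<phi> ` S - {\<phi> v} = \<phi> ` (S - {v})" using inj by (auto simp: inj_def)
  define g where "g = (\<Prod>w\<in>S - {v}. [:- real w, 1:])"
  have "degree g = card (S - {v})"
    unfolding g_def by (subst degree_prod_eq_sum_degree) auto
  also have "\<dots> \<le> CARD('d)" using assms v by auto
  finally obtain a :: "real^'d" and c where ac: "\<forall>t. inner a (mom t) + c = poly g t"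
    using poly_affine[of g, where 'd='d] by auto
  have sub: "\<phi> ` (S - {v}) \<subseteq> {y. inner a y = - c}"
  proof
    fix y assume "y \<in> \<phi> ` (S - {v})"
    then obtain w where w: "w \<in> S" "w \<noteq> v" "y = \<phi> w" by auto
    have "poly g (real w) = 0"
      unfolding g_def poly_prod using w assms(1) by (subst prod_zero_iff) auto
    thus "y \<in> {y. inner a y = - c}" using ac[rule_format, of "real w"] w(3)
      by (simp add: \<phi>_def eq_neg_iff_add_eq_0)
  qed
  have "affine hull (\<phi> ` (S - {v})) \<subseteq> {y. inner a y = - c}"
    using sub affine_hyperplane[of a "-c"] by (rule hull_minimal)
  hence "\<phi> v \<in> {y. inner a y = - c}" using v(2) unfolding eq by blast
  hence "inner a (mom (real v)) + c = 0" by (simp add: \<phi>_def)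
  moreover have "poly g (real v) \<noteq> 0"
  proof -
    have "poly g (real v) = (\<Prod>w\<in>S-{v}. real v - real w)" by (simp add: g_def poly_prod)
    moreover have "(\<Prod>w\<in>S-{v}. real v - real w) \<noteq> 0"
      using assms(1) by (subst prod_zero_iff) auto
    ultimately show ?thesis by simp
  qed
  ultimately show False using ac[rule_format, of "real v"] by simp
qed

lemma aff_dim_img:
  fixes S :: "nat set"
  assumes "finite S" "card S \<le> CARD('d::finite) + 1"
  shows "aff_dim ((\<lambda>v. mom (real v) :: real^'d) ` S) = int (card S) - 1"
proof -
  have inj: "inj (\<lambda>v. mom (real v) :: real^'d)" by (rule mom_real_inj)
  have "card ((\<lambda>v. mom (real v) :: real^'d) ` S) = card S"
    using card_image[OF inj_on_subset[OF inj subset_UNIV]] .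
  thus ?thesis using aff_dim_affine_independent[OF aff_indep[where 'd='d, OF assms]] by simp
qed



fun rp :: "nat \<Rightarrow> nat \<Rightarrow> real poly" where
  "rp r 0 = 1"
| "rp r (Suc 0) = [:- real r, 1:] ^ 2"
| "rp r (Suc (Suc L)) = [:- real r, 1:] * [:- real (Suc r), 1:] * rp (Suc (Suc r)) L"

lemma lin_props: "([:c, 1:] :: real poly) \<noteq> 0" "degree ([:c, 1:] :: real poly) = 1"
  "lead_coeff ([:c, 1:] :: real poly) = 1"
  by auto

lemma rp_props: "rp r L \<noteq> 0 \<and> degree (rp r L) = L + L mod 2 \<and> lead_coeff (rp r L) = 1"
proof (induction r L rule: rp.induct)
  case (1 r) then show ?case by simp
next
  case (2 r)
  have "degree ([:- real r, 1:] ^ 2) = 2"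
    by (simp only: degree_power_eq[OF lin_props(1)] lin_props(2))
  moreover have "lead_coeff ([:- real r, 1:] ^ 2) = 1"
    by (simp only: lead_coeff_power lin_props(3)) simp
  moreover have "([:- real r, 1:] :: real poly) ^ 2 \<noteq> 0" using lin_props(1) by (rule power_not_zero)
  ultimately show ?case by simp
next
  case (3 r L)
  let ?a = "[:- real r, 1:] :: real poly" and ?b = "[:- real (Suc r), 1:] :: real poly"
    and ?c = "rp (Suc (Suc r)) L"
  have eq: "rp r (Suc (Suc L)) = ?a * ?b * ?c" by simp
  have nz: "?a * ?b \<noteq> 0" by (intro no_zero_divisors lin_props(1))
  have d1: "degree (?a * ?b * ?c) = degree (?a * ?b) + degree ?c"
    by (rule degree_mult_eq[OF nz]) (use 3 in simp)
  have d2: "degree (?a * ?b) = degree ?a + degree ?b"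
    by (rule degree_mult_eq) (rule lin_props(1))+
  have da: "degree ?a = 1" "degree ?b = 1" by (rule lin_props(2))+
  have dc: "degree ?c = L + L mod 2" using 3 by blast
  have m2: "Suc (Suc L) mod 2 = L mod 2" by simp
  have X: "degree (?a * ?b * ?c) = Suc (Suc L) + Suc (Suc L) mod 2"
    using d1 d2 da dc m2 by linarith
  have la: "lead_coeff ?a = 1" "lead_coeff ?b = 1" by (rule lin_props(3))+
  have lc: "lead_coeff ?c = 1" using 3 by blast
  have Y: "lead_coeff (?a * ?b * ?c) = 1"
    by (simp only: lead_coeff_mult la lc mult_1)
  have Z: "?a * ?b * ?c \<noteq> 0" using 3 by (intro no_zero_divisors nz) simp
  show ?case unfolding eq using X Y Z by (intro conjI)
qed

lemma rp_val: "poly (rp r L) (real m) \<ge> 0 \<and> (poly (rp r L) (real m) = 0 \<longleftrightarrow> r \<le> m \<and> m < r + L)"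
proof (induction r L rule: rp.induct)
  case (1 r) then show ?case by simp
next
  case (2 r) then show ?case by auto
next
  case (3 r L)
  have q: "(real m - real r) * (real m - real (Suc r)) \<ge> 0"
  proof (cases "m \<le> r")
    case True then show ?thesis by (intro mult_nonpos_nonpos) auto
  next
    case False then show ?thesis by (intro mult_nonneg_nonneg) auto
  qed
  have qz: "(real m - real r) * (real m - real (Suc r)) = 0 \<longleftrightarrow> m = r \<or> m = Suc r" by auto
  have e: "poly (rp r (Suc (Suc L))) (real m) =
      ((real m - real r) * (real m - real (Suc r))) * poly (rp (Suc (Suc r)) L) (real m)"
    by (simp add: algebra_simps)
  show ?case unfolding e using q qz 3 by (auto simp: mult_nonneg_nonneg)
qed

definition goodP :: "nat \<Rightarrow> nat set \<Rightarrow> nat set \<Rightarrow> bool" where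
  "goodP D V S \<longleftrightarrow> (\<exists>P::real poly. degree P \<le> D + 1 \<and> coeff P (D + 1) = 1 \<and>
     (\<forall>v\<in>V. poly P (real v) \<ge> 0 \<and> (poly P (real v) = 0 \<longleftrightarrow> v \<in> S)))"

lemma two_runs_good:
  assumes "0 \<notin> V" "(L1 + L1 mod 2) + (L2 + L2 mod 2) \<le> D + 1"
  shows "goodP D V ({r1..<r1+L1} \<union> {r2..<r2+L2})"
proof -
  define pad where "pad = D + 1 - ((L1 + L1 mod 2) + (L2 + L2 mod 2))"
  define P where "P = rp r1 L1 * rp r2 L2 * [:0, 1:] ^ pad"
  have p1: "rp r1 L1 \<noteq> 0" "degree (rp r1 L1) = L1 + L1 mod 2" "lead_coeff (rp r1 L1) = 1"
    using rp_props[of r1 L1] by auto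
  have p2: "rp r2 L2 \<noteq> 0" "degree (rp r2 L2) = L2 + L2 mod 2" "lead_coeff (rp r2 L2) = 1"
    using rp_props[of r2 L2] by auto
  have x0: "([:0, 1:] :: real poly) ^ pad \<noteq> 0" by simp
  have dP: "degree P = D + 1"
    unfolding P_def using p1 p2 x0 assms(2)
    by (simp add: degree_mult_eq degree_linear_power[of 0, simplified] pad_def)
  have lP: "lead_coeff P = 1"
    unfolding P_def using p1 p2 by (simp add: lead_coeff_mult lead_coeff_power)
  have vals: "poly P (real v) \<ge> 0 \<and> (poly P (real v) = 0 \<longleftrightarrow> v \<in> {r1..<r1+L1} \<union> {r2..<r2+L2})"
    if "v \<in> V" for v
  proof -
    have v0: "v > 0" using that assms(1) by (cases v) auto
    have e: "poly P (real v) = poly (rp r1 L1) (real v) * poly (rp r2 L2) (real v) * real v ^ pad"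
      by (simp add: P_def)
    have pos: "real v ^ pad > 0" using v0 by simp
    show ?thesis unfolding e using rp_val[of r1 L1 v] rp_val[of r2 L2 v] pos
      by (auto simp: mult_nonneg_nonneg)
  qed
  show ?thesis unfolding goodP_def
    by (intro exI[of _ P]) (use dP lP vals in auto)
qed

lemma cover:
  assumes "2 \<le> k" "k \<le> D" "3 \<le> D" "k \<le> n" "1 \<le> a" "a < b" "b \<le> n"
  shows "\<exists>S. S \<subseteq> {1..n} \<and> card S = k \<and> a \<in> S \<and> b \<in> S \<and> goodP D {1..n} S"
proof (cases "b < a + k")
  case True
  define r where "r = min a (n + 1 - k)"
  have S: "{r..<r+k} \<union> {0..<0+0} = {r..<r+k}" by simp
  have g: "goodP D {1..n} ({r..<r+k} \<union> {0..<0+0})"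
    using assms by (intro two_runs_good) auto
  show ?thesis
    by (intro exI[of _ "{r..<r+k}"]) (use g S True assms in \<open>auto simp: r_def\<close>)
next
  case False
  define L1 where "L1 = (if even k \<and> 4 \<le> k then 2 else (1::nat))"
  define L2 where "L2 = k - L1"
  have L: "1 \<le> L1" "1 \<le> L2" "L1 + L2 = k" using assms by (auto simp: L1_def L2_def)
  have deg: "(L1 + L1 mod 2) + (L2 + L2 mod 2) \<le> D + 1"
  proof (cases "k = 2")
    case True then show ?thesis using assms by (simp add: L1_def L2_def)
  next
    case k2: False
    show ?thesis
    proof (cases "even k")
      case True
      then have "L1 = 2" "even L2" using k2 assms by (auto simp: L1_def L2_def)
      then show ?thesis using L assms by auto
    next
      case False
      then have "L1 = 1" "even L2" using assms by (auto simp: L1_def L2_def)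
      then show ?thesis using L assms by auto
    qed
  qed
  define r2 where "r2 = b + 1 - L2"
  have r2: "a + L1 \<le> r2" "r2 + L2 = b + 1" using False L assms by (auto simp: r2_def)
  define S where "S = {a..<a+L1} \<union> {r2..<r2+L2}"
  have g: "goodP D {1..n} S" unfolding S_def by (rule two_runs_good) (use deg in auto)
  have c: "card S = k" unfolding S_def
    using r2 L by (subst card_Un_disjoint) auto
  show ?thesis
    by (intro exI[of _ S]) (use g c r2 L assms in \<open>auto simp: S_def\<close>)
qed



lemma goodP_affine:
  assumes "goodP CARD('d::finite) V S"
  shows "\<exists>(a::real^'d) c. \<forall>v\<in>V. real v ^ (CARD('d)+1) - (inner a (mom (real v)) + c) \<ge> 0 \<and>
           (real v ^ (CARD('d)+1) - (inner a (mom (real v)) + c) = 0 \<longleftrightarrow> v \<in> S)"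
proof -
  obtain P :: "real poly" where P: "degree P \<le> CARD('d) + 1" "coeff P (CARD('d) + 1) = 1"
    "\<forall>v\<in>V. poly P (real v) \<ge> 0 \<and> (poly P (real v) = 0 \<longleftrightarrow> v \<in> S)"
    using assms unfolding goodP_def by blast
  define g where "g = monom 1 (CARD('d) + 1) - P"
  have "degree g \<le> CARD('d)"
  proof (rule degree_le, intro allI impI)
    fix i assume i: "CARD('d) < i"
    show "coeff g i = 0"
    proof (cases "i = CARD('d) + 1")
      case True then show ?thesis using P(2) by (simp add: g_def)
    next
      case False
      then have "coeff P i = 0" using P(1) i by (intro coeff_eq_0) simp
      then show ?thesis using False by (simp add: g_def)
    qed
  qed
  then obtain a :: "real^'d" and c where ac: "\<forall>t. inner a (mom t) + c = poly g t"
    using poly_affine[of g, where 'd='d] by auto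
  have "real v ^ (CARD('d)+1) - (inner a (mom (real v)) + c) = poly P (real v)" for v
    using ac[rule_format, of "real v"] by (simp add: g_def poly_monom)
  thus ?thesis using P(3) by (intro exI[of _ a] exI[of _ c]) simp
qed

lemma chrom_upper:
  assumes "k_uniform k V E" "card V = n"
  shows "strong_chromatic k V E \<le> n \<and> (\<exists>\<kappa>. strong_coloring k V E n \<kappa>)"
proof -
  have fin: "finite V" using assms(1) by (simp add: k_uniform_def)
  obtain h where h: "bij_betw h V {0..<card V}" using ex_bij_betw_finite_nat[OF fin] by blast
  have col: "strong_coloring k V E n (\<lambda>v. h v + 1)"
    unfolding strong_coloring_def
  proof (intro conjI ballI)
    fix v assume "v \<in> V"
    then have "h v \<in> {0..<card V}" using bij_betwE[OF h] by blast
    then show "h v + 1 \<in> {1..n}" using assms(2) by auto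
  next
    fix e assume e: "e \<in> E"
    then have "e \<subseteq> V" "card e = k" using assms(1) by (auto simp: k_uniform_def)
    moreover have "inj_on (\<lambda>v. h v + 1) V" using h by (auto simp: bij_betw_def inj_on_def)
    ultimately show "card ((\<lambda>v. h v + 1) ` e) = k"
      using card_image inj_on_subset by metis
  qed
  then show ?thesis unfolding strong_chromatic_def by (auto intro: Least_le)
qed

lemma chrom_lower:
  assumes "k_uniform k V E" "\<forall>a\<in>V. \<forall>b\<in>V. a \<noteq> b \<longrightarrow> (\<exists>e\<in>E. a \<in> e \<and> b \<in> e)"
    and "strong_coloring k V E c \<kappa>"
  shows "card V \<le> c"
proof -
  have inj: "inj_on \<kappa> V"
  proof (rule inj_onI, rule ccontr)
    fix a b assume ab: "a \<in> V" "b \<in> V" "\<kappa> a = \<kappa> b" "a \<noteq> b"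
    then obtain e where e: "e \<in> E" "a \<in> e" "b \<in> e" using assms(2) by blast
    have "e \<subseteq> V" "card e = k" "finite V" using assms(1) e by (auto simp: k_uniform_def)
    hence fe: "finite e" using finite_subset by blast
    have "card (\<kappa> ` e) = card e" using assms(3) e \<open>card e = k\<close> by (simp add: strong_coloring_def)
    hence "inj_on \<kappa> e" using inj_on_iff_eq_card[OF fe] by blast
    thus False using ab e by (auto simp: inj_on_def)
  qed
  have "\<kappa> ` V \<subseteq> {1..c}" using assms(3) by (auto simp: strong_coloring_def)
  hence "card (\<kappa> ` V) \<le> card {1..c}" by (intro card_mono) auto
  thus ?thesis using card_image[OF inj] by simp
qed

theorem mainTheorem12:
  fixes k n :: nat
  assumes "CARD('d::finite) \<ge> 3" and "2 \<le> k" and "k \<le> CARD('d)" and "n \<ge> CARD('d)"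
  shows "chi_s TYPE('d) k n = n"
proof -
  define D where "D = CARD('d)"
  define V where "V = {1..n}"
  define E where "E = {S. S \<subseteq> V \<and> card S = k \<and> goodP D V S}"
  define \<phi> where "\<phi> = (\<lambda>v. mom (real v) :: real^'d)"
  have finV: "finite V" and cardV: "card V = n" by (auto simp: V_def)
  have ku: "k_uniform k V E" by (auto simp: k_uniform_def E_def finV)
  have injV: "inj_on \<phi> V" using mom_real_inj[where 'd='d] unfolding \<phi>_def by (rule inj_on_subset) simp
  have lin: "linear_embedding k V E \<phi>"
    unfolding linear_embedding_def
  proof (intro conjI ballI)
    fix e assume e: "e \<in> E"
    then have "finite e" "card e = k" using finV by (auto simp: E_def intro: finite_subset)
    then show "aff_dim (\<phi> ` e) = int k - 1"
      using aff_dim_img[where 'd='d, of e] assms(3) unfolding \<phi>_def by simp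
  next
    fix e1 e2 assume e1: "e1 \<in> E" and e2: "e2 \<in> E"
    obtain a1 c1 where h1: "\<forall>v\<in>V. real v ^ (CARD('d)+1) - (inner a1 (\<phi> v) + c1) \<ge> 0 \<and>
           (real v ^ (CARD('d)+1) - (inner a1 (\<phi> v) + c1) = 0 \<longleftrightarrow> v \<in> e1)"
      using goodP_affine[where 'd='d, of V e1] e1 unfolding E_def D_def \<phi>_def by auto
    obtain a2 c2 where h2: "\<forall>v\<in>V. real v ^ (CARD('d)+1) - (inner a2 (\<phi> v) + c2) \<ge> 0 \<and>
           (real v ^ (CARD('d)+1) - (inner a2 (\<phi> v) + c2) = 0 \<longleftrightarrow> v \<in> e2)"
      using goodP_affine[where 'd='d, of V e2] e2 unfolding E_def D_def \<phi>_def by auto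
    have sub: "e1 \<subseteq> V" "e2 \<subseteq> V" using e1 e2 by (auto simp: E_def)
    have "convex hull (\<phi>`e1) \<inter> convex hull (\<phi>`e2) \<subseteq> convex hull (\<phi>`(e1\<inter>e2))"
      by (rule core[OF finV injV sub h1 h2])
    moreover have "convex hull (\<phi>`(e1\<inter>e2)) \<subseteq> convex hull (\<phi>`e1) \<inter> convex hull (\<phi>`e2)"
      by (auto intro: hull_mono[THEN subsetD, rotated])
    ultimately show "convex hull (\<phi>`e1) \<inter> convex hull (\<phi>`e2) = convex hull (\<phi>`(e1\<inter>e2))"
      by blast
  qed
  have emb: "embeddable TYPE('d) k V E"
    unfolding embeddable_def using ku lin by blast
  have cov: "\<forall>a\<in>V. \<forall>b\<in>V. a \<noteq> b \<longrightarrow> (\<exists>e\<in>E. a \<in> e \<and> b \<in> e)"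
  proof (intro ballI impI)
    fix a b assume ab: "a \<in> V" "b \<in> V" "a \<noteq> b"
    have c: "\<exists>S. S \<subseteq> {1..n} \<and> card S = k \<and> x \<in> S \<and> y \<in> S \<and> goodP D {1..n} S"
      if "x \<in> V" "y \<in> V" "x < y" for x y
      using cover[of k D n x y] that assms by (auto simp: D_def V_def)
    show "\<exists>e\<in>E. a \<in> e \<and> b \<in> e"
    proof (cases "a < b")
      case True then show ?thesis using c[OF ab(1,2)] by (auto simp: E_def V_def)
    next
      case False then have "b < a" using ab by simp
      then show ?thesis using c[OF ab(2,1)] by (auto simp: E_def V_def)
    qed
  qed
  have up: "strong_chromatic k V E \<le> n" "\<exists>\<kappa>. strong_coloring k V E n \<kappa>"
    using chrom_upper[OF ku cardV] by auto
  have "\<exists>\<kappa>. strong_coloring k V E (strong_chromatic k V E) \<kappa>"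
    unfolding strong_chromatic_def by (rule LeastI_ex) (use up in blast)
  then obtain \<kappa> where "strong_coloring k V E (strong_chromatic k V E) \<kappa>" by blast
  hence "n \<le> strong_chromatic k V E" using chrom_lower[OF ku cov] cardV by metis
  hence sc: "strong_chromatic k V E = n" using up by simp
  let ?X = "{strong_chromatic k V E | (V :: nat set) E. embeddable TYPE('d) k V E \<and> card V = n}"
  have bound: "y \<le> n" if Y: "y \<in> ?X" for y
  proof -
    obtain V' :: "nat set" and E' :: "nat set set" where y: "y = strong_chromatic k V' E'"
      "embeddable TYPE('d) k V' E'" "card V' = n" using Y by blast
    have "k_uniform k V' E'" using y(2) by (simp add: embeddable_def)
    thus ?thesis using chrom_upper[of k V' E' n] y by simp
  qed
  have "\<exists>(V'::nat set) E'. n = strong_chromatic k V' E' \<and> embeddable TYPE('d) k V' E' \<and> card V' = n"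
    by (rule exI[of _ V], rule exI[of _ E]) (use emb cardV sc in simp)
  hence mem: "n \<in> ?X" by simp
  have "?X \<subseteq> {..n}" using bound by (simp only: subset_iff atMost_iff) blast
  hence fin: "finite ?X" using finite_atMost by (rule finite_subset)
  show ?thesis unfolding chi_s_def by (rule Max_eqI[OF fin bound mem])
qed

end
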